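(* Let $n\ge2$ and for $r\in(0,\pi)$ let $h_r$ be the solution on $[0,r)$ of $$h_r''(u)(h_r'(u))^{n-1}=e^{h_r(u)}(\sin u)^{n-1},\qquad \lim_{u\to r}h_r(u)=\infty,$$ real-analytic in $u^2$. Then $h_r(0)\ge -\pi\, n^{1/n}\pi^{1/n}$ for all $r\in(0,\pi)$; consequently $\inf_{[0,r)}h_r\ge -\pi\,n^{1/n}\pi^{1/n}$.
   Context: This is the ODE for the Kähler potential (as a function of $u=\sqrt\rho$, $\rho(x,v)=4|v|^2$) of the complete Kähler–Einstein metric of Ricci curvature $-1$ on the Grauert tube $T^rH^n$ over real hyperbolic space $H^n$, whose maximal radius is $\pi$. *)

theory Defs
  imports "HOL-Analysis.Analysis"
begin

definition real_analytic_on :: "real set \<Rightarrow> (real \<Rightarrow> real) \<Rightarrow> bool" where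
  "real_analytic_on S g \<longleftrightarrow>
     (\<forall>x\<in>S. \<exists>e>0. \<exists>c::nat \<Rightarrow> real.
        \<forall>y\<in>S. \<bar>y - x\<bar> < e \<longrightarrow> (\<lambda>k. c k * (y - x) ^ k) sums g y)"

end

theory Submission
  imports Defs
begin
lemma deriv_zero_at_0:
  fixes r :: real and h h' :: "real \<Rightarrow> real"
  assumes r: "0 < r"
    and d1: "(h has_real_derivative h' 0) (at 0 within {0..<r})"
    and analytic: "\<exists>g. real_analytic_on {0..<r\<^sup>2} g \<and> (\<forall>u\<in>{0..<r}. h u = g (u\<^sup>2))"
  shows "h' 0 = 0"
proof -
  obtain g where ga: "real_analytic_on {0..<r\<^sup>2} g" and hg: "\<forall>u\<in>{0..<r}. h u = g (u\<^sup>2)"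
    using analytic by blast
  have "(0::real) \<in> {0..<r\<^sup>2}" using r by simp
  then obtain e cc where e: "e > 0" and
    sm: "\<forall>y\<in>{0..<r\<^sup>2}. \<bar>y - 0\<bar> < e \<longrightarrow> (\<lambda>k. cc k * (y - 0) ^ k) sums g y"
    using ga unfolding real_analytic_on_def by blast
  define z0 where "z0 = min e (r\<^sup>2) / 2"
  have z0: "z0 > 0" "z0 < e" "z0 < r\<^sup>2" using e r by (auto simp: z0_def min_def)
  have smy: "(\<lambda>k. cc k * y ^ k) sums g y" if "0 \<le> y" "y \<le> z0" for y
    using sm that z0 by auto
  have "summable (\<lambda>k. cc k * z0 ^ k)" using smy[of z0] z0 by (auto simp: sums_iff)
  define P where "P = (\<lambda>y::real. \<Sum>k. cc k * y ^ k)"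
  obtain D where D: "DERIV P 0 :> D"
    using termdiffs_strong[OF \<open>summable _\<close>, of 0] z0 unfolding P_def by auto
  have DP: "((\<lambda>u. P (u\<^sup>2)) has_real_derivative D * (2 * 0)) (at 0)"
    using DERIV_chain2[OF _ DERIV_pow[of 2 0], of P D] D by simp
  define \<delta> where "\<delta> = min r (sqrt z0)"
  have \<delta>: "\<delta> > 0" using r z0 by (auto simp: \<delta>_def)
  have eq: "h u = P (u\<^sup>2)" if "u \<in> {0..<\<delta>}" for u
  proof -
    have "u < r" "u < sqrt z0" "0 \<le> u" using that by (auto simp: \<delta>_def)
    then have "u\<^sup>2 < z0"
      by (metis abs_of_nonneg real_sqrt_abs real_sqrt_less_iff)
    then have "g (u\<^sup>2) = P (u\<^sup>2)" using smy[of "u\<^sup>2"] unfolding P_def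
      by (simp add: sums_unique)
    then show ?thesis using hg \<open>u < r\<close> \<open>0 \<le> u\<close> by simp
  qed
  have "(h has_real_derivative 0) (at 0 within {0..<\<delta>})"
  proof (rule has_field_derivative_transform_within[OF _ \<delta>])
    show "((\<lambda>u. P (u\<^sup>2)) has_real_derivative 0) (at 0 within {0..<\<delta>})"
      using DP has_field_derivative_at_within by fastforce
    show "0 \<in> {0..<\<delta>}" using \<delta> by simp
    show "\<And>x. x \<in> {0..<\<delta>} \<Longrightarrow> dist x 0 < \<delta> \<Longrightarrow> P (x\<^sup>2) = h x" using eq by simp
  qed
  moreover have "(h has_real_derivative h' 0) (at 0 within {0..<\<delta>})"
    using d1 by (rule has_field_derivative_subset) (auto simp: \<delta>_def)
  moreover have "at (0::real) within {0..<\<delta>} \<noteq> bot"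
  proof -
    have "at (0::real) within {0..<\<delta>} = at_right 0"
      using \<delta> by (intro at_within_nhd[where S="{..<\<delta>}"]) auto
    then show ?thesis by simp
  qed
  ultimately show ?thesis
    using vector_derivative_unique_within
    by (metis has_real_derivative_iff_has_vector_derivative)
qed

theorem lemma4p1:
  fixes n :: nat and r :: real and h h' h'' :: "real \<Rightarrow> real"
  assumes n: "n \<ge> 2"
    and r: "0 < r" "r < pi"
    and d1: "\<And>u. u \<in> {0..<r} \<Longrightarrow> (h has_real_derivative h' u) (at u within {0..<r})"
    and d2: "\<And>u. u \<in> {0..<r} \<Longrightarrow> (h' has_real_derivative h'' u) (at u within {0..<r})"
    and ode: "\<And>u. u \<in> {0..<r} \<Longrightarrow> h'' u * (h' u) ^ (n - 1) = exp (h u) * (sin u) ^ (n - 1)"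
    and blowup: "filterlim h at_top (at_left r)"
    and analytic: "\<exists>g. real_analytic_on {0..<r\<^sup>2} g \<and> (\<forall>u\<in>{0..<r}. h u = g (u\<^sup>2))"
  shows "h 0 \<ge> - pi * root n (real n) * root n pi
         \<and> (\<forall>u\<in>{0..<r}. h u \<ge> - pi * root n (real n) * root n pi)"
proof -
  define c where "c = root n (real n * pi)"
  have npos: "n > 0" using n by simp
  have cdef: "- pi * root n (real n) * root n pi = - pi * c"
    unfolding c_def by (simp add: real_root_mult)
  have c0: "c \<ge> 0" unfolding c_def using pi_gt_zero by (simp add: real_root_ge_zero)
  have cn: "c ^ n = real n * pi" unfolding c_def using npos by simp
  have h'0: "h' 0 = 0"
    using deriv_zero_at_0[of r h h', OF r(1) _ analytic] d1[of 0] r by simp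
  have int: "u \<in> {0<..<r} \<Longrightarrow> at u within {0..<r} = at u" for u
    by (rule at_within_interior) simp
  have D1: "u \<in> {0<..<r} \<Longrightarrow> DERIV h u :> h' u" for u
    using d1[of u] int[of u] by auto
  have D2: "u \<in> {0<..<r} \<Longrightarrow> DERIV h' u :> h'' u" for u
    using d2[of u] int[of u] by auto
  have ch: "continuous_on {0..<r} h"
    unfolding continuous_on_eq_continuous_within using d1 DERIV_continuous by blast
  have ch': "continuous_on {0..<r} h'"
    unfolding continuous_on_eq_continuous_within using d2 DERIV_continuous by blast
  have DF: "DERIV (\<lambda>u. h' u ^ n) u :> real n * exp (h u) * sin u ^ (n - 1)"
    if "u \<in> {0<..<r}" for u
  proof -
    have "DERIV (\<lambda>u. h' u ^ n) u :> real n * h' u ^ (n - 1) * h'' u"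
      using DERIV_power[OF D2[OF that], of n] by (simp add: mult_ac)
    moreover have "real n * h' u ^ (n - 1) * h'' u = real n * exp (h u) * sin u ^ (n - 1)"
      using ode[of u] that by (simp add: mult_ac)
    ultimately show ?thesis by metis
  qed
  have cF: "continuous_on {0..<r} (\<lambda>u. h' u ^ n)"
    using ch' by (intro continuous_intros)
  have sinpos: "u \<in> {0<..<r} \<Longrightarrow> sin u > 0" for u
    using r by (intro sin_gt_zero) auto
  have mvth: "\<exists>z. a < z \<and> z < b \<and> h b - h a = (b - a) * h' z"
    if ab: "0 \<le> a" "a < b" "b < r" for a b
  proof -
    have cc: "continuous_on {a..b} h" using ab by (intro continuous_on_subset[OF ch]) auto
    have dd: "h differentiable (at x)" if "a < x" "x < b" for x
      using D1[of x] that ab unfolding real_differentiable_def by auto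
    obtain l z where z: "a < z" "z < b" "DERIV h z :> l" and e: "h b - h a = (b - a) * l"
      using MVT[OF ab(2) cc dd] by blast
    have "l = h' z" using DERIV_unique[OF z(3) D1[of z]] z ab by auto
    then show ?thesis using z e by blast
  qed
  have big: "\<exists>x. a < x \<and> x < r \<and> h x > M" if "a < r" for a M
  proof -
    have "eventually (\<lambda>x. h x > M) (at_left r)"
      using blowup by (simp add: filterlim_at_top_dense)
    moreover have "eventually (\<lambda>x. x \<in> {a<..<r}) (at_left r)"
      using eventually_at_left_real[OF that] .
    ultimately have "eventually (\<lambda>x. h x > M \<and> x \<in> {a<..<r}) (at_left r)"
      by (rule eventually_conj)
    then have "\<exists>x. h x > M \<and> x \<in> {a<..<r}"
      by (intro eventually_happens'[of "at_left r"]) auto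
    then show ?thesis by auto
  qed
  have part1: "h 0 \<ge> - pi * c"
  proof (rule ccontr)
    assume "\<not> h 0 \<ge> - pi * c"
    then have h0: "h 0 < - pi * c" by simp
    obtain u1 where u1: "0 < u1" "u1 < r" "h u1 > 0" using big[of 0 0] r by auto
    define K where "K = {u \<in> {0..u1}. h u \<ge> 0}"
    have "continuous_on {0..u1} h" using u1 by (intro continuous_on_subset[OF ch]) auto
    then have clK: "closed K"
    proof -
      have "K = {0..u1} \<inter> h -` {0..}" by (auto simp: K_def)
      then show ?thesis using continuous_closed_preimage[of "{0..u1}" h "{0..}"] \<open>continuous_on {0..u1} h\<close>
        by simp
    qed
    have Kne: "K \<noteq> {}" using u1 by (auto simp: K_def)
    have Kbd: "bdd_below K" unfolding bdd_below_def K_def by (rule exI[of _ 0]) auto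
    define u0 where "u0 = Inf K"
    have u0K: "u0 \<in> K" using closed_contains_Inf[OF Kne Kbd clK] by (simp add: u0_def)
    have below: "h u < 0" if "0 \<le> u" "u < u0" for u
    proof (rule ccontr)
      assume "\<not> h u < 0"
      then have "u \<in> K" using that u0K by (auto simp: K_def)
      then have "u0 \<le> u" unfolding u0_def using Kbd by (rule cInf_lower)
      then show False using that by simp
    qed
    have u0r: "u0 < r" "0 \<le> u0" "h u0 \<ge> 0" using u0K u1 by (auto simp: K_def)
    have "- pi * c \<le> 0" using c0 by simp
    then have "u0 \<noteq> 0" using u0r h0 by auto
    then have u0pos: "0 < u0" using u0r by simp
    have h'le: "h' u \<le> c" if "0 < u" "u < u0" for u
    proof (rule ccontr)
      assume "\<not> h' u \<le> c"
      then have "c ^ n < h' u ^ n" using c0 npos by (intro power_strict_mono) auto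
      have cFu: "continuous_on {0..u} (\<lambda>u. h' u ^ n)"
        using that u0r by (intro continuous_on_subset[OF cF]) auto
      have dFu: "(\<lambda>u. h' u ^ n) differentiable (at x)" if "0 < x" "x < u" for x
        using DF[of x] that \<open>u < u0\<close> u0r unfolding real_differentiable_def by auto
      obtain l z where z: "0 < z" "z < u" "DERIV (\<lambda>u. h' u ^ n) z :> l"
        and eqF: "h' u ^ n - h' 0 ^ n = (u - 0) * l"
        using MVT[OF \<open>0 < u\<close> cFu dFu] by blast
      have zr: "z \<in> {0<..<r}" using z that u0r by auto
      have "l = real n * exp (h z) * sin z ^ (n - 1)"
        using DERIV_unique[OF z(3) DF[OF zr]] .
      moreover have "exp (h z) \<le> 1" using below[of z] z that by simp
      moreover have "sin z ^ (n - 1) \<le> 1" "0 \<le> sin z ^ (n - 1)"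
        using sinpos[OF zr] by (auto intro: power_le_one)
      ultimately have "exp (h z) * sin z ^ (n - 1) \<le> 1" "l = real n * (exp (h z) * sin z ^ (n - 1))"
        by (auto intro: mult_le_one)
      then have "l \<le> real n"
        using mult_left_mono[of "exp (h z) * sin z ^ (n - 1)" 1 "real n"] by simp
      have "h' u ^ n = u * l" using eqF h'0 npos by (simp add: zero_power)
      also have "\<dots> \<le> u * real n" using \<open>l \<le> real n\<close> that by (intro mult_left_mono) auto
      finally have "h' u ^ n \<le> u * real n" .
      also have "\<dots> < pi * real n" using that u0r r npos by simp
      finally show False using \<open>c ^ n < h' u ^ n\<close> cn by (simp add: mult.commute)
    qed
    obtain z where z: "0 < z" "z < u0" and eqh: "h u0 - h 0 = (u0 - 0) * h' z"
      using mvth[of 0 u0] u0pos u0r by auto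
    have "u0 * h' z \<le> u0 * c" using h'le[OF z(1,2)] u0pos by (intro mult_left_mono) auto
    then have "h u0 - h 0 \<le> u0 * c" using eqh by simp
    also have "\<dots> \<le> pi * c" using u0r r c0 by (intro mult_right_mono) auto
    finally show False using h0 u0r by simp
  qed
  have h'nz: "h' u \<noteq> 0" if "u \<in> {0<..<r}" for u
  proof
    assume "h' u = 0"
    have z: "(0::real) ^ (n - 1) = 0" using n by simp
    have "exp (h u) * sin u ^ (n - 1) = h'' u * h' u ^ (n - 1)" using ode[of u] that by simp
    also have "\<dots> = 0" using \<open>h' u = 0\<close> z by simp
    finally have "exp (h u) * sin u ^ (n - 1) = 0" .
    then show False using sinpos[OF that] by simp
  qed
  have h'pos: "h' u \<ge> 0" if u: "u \<in> {0<..<r}" for u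
  proof (rule ccontr)
    assume neg: "\<not> h' u \<ge> 0"
    obtain x where x: "u < x" "x < r" "h x > h u" using big[of u "h u"] u by auto
    obtain z where z: "u < z" "z < x" and eqh: "h x - h u = (x - u) * h' z"
      using mvth[of u x] x u by auto
    have "0 < (x - u) * h' z" using eqh x by simp
    then have "h' z > 0" using x by (simp add: zero_less_mult_iff)
    have cz: "continuous_on {u..z} h'" using u z x by (intro continuous_on_subset[OF ch']) auto
    obtain w where w: "u \<le> w" "w \<le> z" "h' w = 0"
      using IVT'[of h' u 0 z, OF _ _ _ cz] neg z \<open>h' z > 0\<close> by auto
    then show False using h'nz[of w] u z x by auto
  qed
  have mono: "h 0 \<le> h u" if "u \<in> {0..<r}" for u
  proof (cases "u = 0")
    case False
    then have u: "0 < u" "u < r" using that by auto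
    obtain z where z: "0 < z" "z < u" and eqh: "h u - h 0 = (u - 0) * h' z"
      using mvth[of 0 u] u by auto
    have "0 \<le> (u - 0) * h' z" using h'pos[of z] z u by simp
    then show ?thesis using eqh by simp
  qed simp
  show ?thesis unfolding cdef using part1 mono by (auto intro: order_trans)
qed

end
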